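(* Let $m,d\geq 1$ and let $f:(0,\infty)^m\times\mathbb{R}^d\to\mathbb{R}$, $f=f(t,x)$, satisfy $f(t,0)=0$, have continuous first-order partial derivatives with respect to each $t^\alpha$ and continuous second-order partial derivatives with respect to the $x^a$. Suppose $f$ is a solution of the backward diffusion-like PDE system $$\frac{\partial f}{\partial t^\alpha}(t,x)+\frac12\,c_\alpha(t)\,\Delta_x f(t,x)=0,\qquad \alpha=1,\dots,m.$$ Then $f$ depends on the point $t=(t^1,\dots,t^m)$ only through the product $v=t^1\cdots t^m$, i.e. there is a function $\varphi$ with $f(t,x)=\varphi(t^1\cdots t^m,x)$; thus $f$ is a function of the volume $v$ of the box $\Omega_{0t}=\prod_\alpha[0,t^\alpha]$.
   Context: Here $c_\alpha(t)=\frac{\partial v}{\partial t^\alpha}=\prod_{\beta\neq\alpha}t^\beta$ where $v=t^1\cdots t^m$, and $\Delta_x f=\sum_{a=1}^d\frac{\partial^2 f}{(\partial x^a)^2}$. *)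

theory Defs
  imports "HOL-Analysis.Analysis"
begin

definition orthant :: "(real^'m) set" where
  "orthant = {t. \<forall>\<alpha>. 0 < t $ \<alpha>}"

definition vupd :: "real^'n \<Rightarrow> 'n \<Rightarrow> real \<Rightarrow> real^'n" where
  "vupd v i s = (\<chi> j. if j = i then s else v $ j)"

definition c_coef :: "real^'m \<Rightarrow> 'm \<Rightarrow> real" where
  "c_coef t \<alpha> = (\<Prod>\<beta>\<in>UNIV - {\<alpha>}. t $ \<beta>)"

end

theory Submission
  imports Defs
begin

lemma vupd_nth: "vupd v i s $ j = (if j = i then s else v $ j)"
  by (simp add: vupd_def)

lemma c_coef_mul: "c_coef t \<alpha> * t $ \<alpha> = (\<Prod>\<beta>\<in>UNIV. t $ \<beta>)"
  unfolding c_coef_def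
  using prod.remove[of UNIV \<alpha> "\<lambda>\<beta>. t $ \<beta>"] by (simp add: mult.commute)

lemma move:
  fixes f :: "real^'m \<Rightarrow> real^'d \<Rightarrow> real"
    and Ft :: "'m \<Rightarrow> real^'m \<Rightarrow> real^'d \<Rightarrow> real"
  assumes dt: "\<forall>\<alpha>. \<forall>t\<in>orthant. \<forall>x.
               ((\<lambda>s. f (vupd t \<alpha> s) x) has_real_derivative Ft \<alpha> t x) (at (t $ \<alpha>))"
    and dt_cont: "\<forall>\<alpha>. continuous_on (orthant \<times> UNIV) (\<lambda>(t, x). Ft \<alpha> t x)"
    and pde: "\<forall>\<alpha>. \<forall>t\<in>orthant. \<forall>x.
               Ft \<alpha> t x + 1/2 * c_coef t \<alpha> * L t x = 0"
    and t: "t \<in> orthant" and ab: "\<alpha> \<noteq> \<beta>" and r: "r > 0"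
  shows "f (vupd (vupd t \<alpha> (t$\<alpha> * r)) \<beta> (t$\<beta> / r)) x = f t x"
proof -
  define w where "w a b = vupd (vupd t \<alpha> a) \<beta> b" for a b
  have wn: "w a b $ j = (if j = \<beta> then b else if j = \<alpha> then a else t $ j)" for a b j
    by (simp add: w_def vupd_nth)
  have wO: "w a b \<in> orthant" if "a > 0" "b > 0" for a b
    using t that by (auto simp: orthant_def wn)
  have wa: "vupd (w a b) \<alpha> s = w s b" for a b s
    using ab by (auto simp: vec_eq_iff vupd_nth wn)
  have wb: "vupd (w a b) \<beta> s = w a s" for a b s
    using ab by (auto simp: vec_eq_iff vupd_nth wn)
  have wva: "w a b $ \<alpha> = a" and wvb: "w a b $ \<beta> = b" for a b
    using ab by (auto simp: wn)
  have dA: "((\<lambda>s. f (w s b) x) has_real_derivative Ft \<alpha> (w a b) x) (at a)"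
    if "a > 0" "b > 0" for a b
  proof -
    have "((\<lambda>s. f (vupd (w a b) \<alpha> s) x) has_real_derivative Ft \<alpha> (w a b) x) (at (w a b $ \<alpha>))"
      using dt wO[OF that] by blast
    then show ?thesis by (simp only: wa wva)
  qed
  have dB: "((\<lambda>s. f (w a s) x) has_real_derivative Ft \<beta> (w a b) x) (at b)"
    if "a > 0" "b > 0" for a b
  proof -
    have "((\<lambda>s. f (vupd (w a b) \<beta> s) x) has_real_derivative Ft \<beta> (w a b) x) (at (w a b $ \<beta>))"
      using dt wO[OF that] by blast
    then show ?thesis by (simp only: wb wvb)
  qed
  have wcont: "continuous_on S (\<lambda>(a,b). w a b)" for S
  proof -
    have weq: "(\<lambda>(a,b). w a b) = (\<lambda>p. \<chi> j. if j = \<beta> then snd p else if j = \<alpha> then fst p else t$j)"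
      by (auto simp: vec_eq_iff wn fun_eq_iff)
    show ?thesis unfolding weq
      apply (rule continuous_on_vec_lambda)
      subgoal for j by (cases "j = \<beta>"; cases "j = \<alpha>") (auto intro!: continuous_intros)
      done
  qed
  have Fcont: "continuous_on ({0<..} \<times> {0<..}) (\<lambda>(a,b). Ft \<gamma> (w a b) x)" for \<gamma>
  proof -
    have "continuous_on ({0<..} \<times> {0<..}) ((\<lambda>(t, x). Ft \<gamma> t x) \<circ> (\<lambda>(a,b). (w a b, x)))"
      apply (rule continuous_on_compose)
       apply (use wcont in \<open>auto intro!: continuous_intros simp: case_prod_beta\<close>)[1]
      apply (rule continuous_on_subset[OF dt_cont[rule_format]])
      using wO by auto
    then show ?thesis by (simp add: o_def case_prod_beta)
  qed
  have D2: "((\<lambda>(a,b). f (w a b) x) has_derivative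
       (\<lambda>(ha,hb). ha * Ft \<alpha> (w a b) x + hb * Ft \<beta> (w a b) x)) (at (a,b))"
    if "a > 0" "b > 0" for a b
  proof -
    have "((\<lambda>(a,b). f (w a b) x) has_derivative
       (\<lambda>(ha,hb). ha * Ft \<alpha> (w a b) x + blinfun_mult_left (Ft \<beta> (w a b) x) hb)) (at (a,b) within {0<..} \<times> {0<..})"
    proof (rule has_derivative_partialsI)
      show "((\<lambda>s. f (w s b) x) has_derivative (\<lambda>h. h * Ft \<alpha> (w a b) x)) (at a within {0<..})"
        using has_derivative_at_withinI[OF dA[OF that, unfolded has_field_derivative_def]] by (simp add: mult_commute_abs)
      show "((\<lambda>y. f (w a' y) x) has_derivative blinfun_apply (blinfun_mult_left (Ft \<beta> (w a' b') x))) (at b' within {0<..})"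
        if "a' \<in> {0<..}" "b' \<in> {0<..}" for a' b'
        using has_derivative_at_withinI[OF dB[of a' b', unfolded has_field_derivative_def]] that by (simp add: mult_commute_abs)
      show "continuous (at (a, b) within {0<..} \<times> {0<..}) (\<lambda>(x', y). blinfun_mult_left (Ft \<beta> (w x' y) x))"
      proof -
        have "continuous_on ({0<..} \<times> {0<..}) (\<lambda>(x', y). blinfun_mult_left (Ft \<beta> (w x' y) x))"
          using bounded_linear.continuous_on[OF bounded_linear_blinfun_mult_left Fcont[of \<beta>]]
          by (simp add: case_prod_beta)
        then show ?thesis using that
          by (simp add: continuous_on_eq_continuous_within)
      qed
    qed (use that in auto)
    moreover have "at (a,b) within {0<..} \<times> {0<..} = at (a,b)"
      using that by (intro at_within_open) (auto intro!: open_Times)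
    ultimately show ?thesis by (simp add: case_prod_beta)
  qed
  define a0 where "a0 = t $ \<alpha>"
  define b0 where "b0 = t $ \<beta>"
  have a0: "a0 > 0" and b0: "b0 > 0" using t by (auto simp: orthant_def a0_def b0_def)
  define F where "F s = f (w (a0 * exp s) (b0 * exp (-s))) x" for s
  have "(F has_real_derivative 0) (at s)" for s
  proof -
    let ?a = "a0 * exp s" and ?b = "b0 * exp (-s)"
    have pa: "?a > 0" "?b > 0" using a0 b0 by auto
    have cur: "((\<lambda>s. (a0 * exp s, b0 * exp (-s))) has_derivative
         (\<lambda>h. (h * ?a, - (h * ?b)))) (at s)"
      by (auto intro!: derivative_eq_intros simp: algebra_simps)
    have "(F has_derivative (\<lambda>h. (h * ?a) * Ft \<alpha> (w ?a ?b) x + (- (h * ?b)) * Ft \<beta> (w ?a ?b) x)) (at s)"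
      unfolding F_def
      using has_derivative_compose[OF cur D2[OF pa]] by (simp add: o_def)
    moreover have "?a * Ft \<alpha> (w ?a ?b) x = ?b * Ft \<beta> (w ?a ?b) x"
    proof -
      have O: "w ?a ?b \<in> orthant" using wO[OF pa] .
      have "Ft \<alpha> (w ?a ?b) x + 1/2 * c_coef (w ?a ?b) \<alpha> * L (w ?a ?b) x = 0"
        using pde O by blast
      then have e1: "Ft \<alpha> (w ?a ?b) x = - 1/2 * c_coef (w ?a ?b) \<alpha> * L (w ?a ?b) x"
        by linarith
      have "Ft \<beta> (w ?a ?b) x + 1/2 * c_coef (w ?a ?b) \<beta> * L (w ?a ?b) x = 0"
        using pde O by blast
      then have e2: "Ft \<beta> (w ?a ?b) x = - 1/2 * c_coef (w ?a ?b) \<beta> * L (w ?a ?b) x"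
        by linarith
      have h: "?a * c_coef (w ?a ?b) \<alpha> = ?b * c_coef (w ?a ?b) \<beta>"
        using c_coef_mul[of "w ?a ?b" \<alpha>] c_coef_mul[of "w ?a ?b" \<beta>] wva[of ?a ?b] wvb[of ?a ?b]
        by (simp only: mult.commute)
      have "?a * Ft \<alpha> (w ?a ?b) x = (- 1/2 * L (w ?a ?b) x) * (?a * c_coef (w ?a ?b) \<alpha>)"
        unfolding e1 by (simp only: mult_ac)
      also have "\<dots> = (- 1/2 * L (w ?a ?b) x) * (?b * c_coef (w ?a ?b) \<beta>)"
        by (simp only: h)
      also have "\<dots> = ?b * Ft \<beta> (w ?a ?b) x"
        unfolding e2 by (simp only: mult_ac)
      finally show ?thesis .
    qed
    ultimately have "(F has_derivative (\<lambda>h. 0)) (at s)"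
      by (simp add: algebra_simps)
    moreover have "(*) (0::real) = (\<lambda>h. 0)" by auto
    ultimately show ?thesis by (simp add: has_field_derivative_def)
  qed
  then have "F (ln r) = F 0" using DERIV_isconst_all by blast
  moreover have "w a0 b0 = t" by (auto simp: vec_eq_iff wn a0_def b0_def)
  ultimately show ?thesis using r
    by (simp add: F_def w_def a0_def b0_def exp_minus divide_inverse)
qed

theorem mainTheorem2:
  fixes f :: "real^'m \<Rightarrow> real^'d \<Rightarrow> real"
    and Ft :: "'m \<Rightarrow> real^'m \<Rightarrow> real^'d \<Rightarrow> real"
    and Fx :: "'d \<Rightarrow> real^'m \<Rightarrow> real^'d \<Rightarrow> real"
    and Fxx :: "'d \<Rightarrow> 'd \<Rightarrow> real^'m \<Rightarrow> real^'d \<Rightarrow> real"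
  assumes zero: "\<forall>t\<in>orthant. f t 0 = 0"
    and dt: "\<forall>\<alpha>. \<forall>t\<in>orthant. \<forall>x.
               ((\<lambda>s. f (vupd t \<alpha> s) x) has_real_derivative Ft \<alpha> t x) (at (t $ \<alpha>))"
    and dt_cont: "\<forall>\<alpha>. continuous_on (orthant \<times> UNIV) (\<lambda>(t, x). Ft \<alpha> t x)"
    and dx: "\<forall>a. \<forall>t\<in>orthant. \<forall>x.
               ((\<lambda>s. f t (vupd x a s)) has_real_derivative Fx a t x) (at (x $ a))"
    and dxx: "\<forall>a b. \<forall>t\<in>orthant. \<forall>x.
               ((\<lambda>s. Fx a t (vupd x b s)) has_real_derivative Fxx a b t x) (at (x $ b))"
    and dxx_cont: "\<forall>a b. continuous_on (orthant \<times> UNIV) (\<lambda>(t, x). Fxx a b t x)"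
    and pde: "\<forall>\<alpha>. \<forall>t\<in>orthant. \<forall>x.
               Ft \<alpha> t x + 1/2 * c_coef t \<alpha> * (\<Sum>a\<in>UNIV. Fxx a a t x) = 0"
  shows "\<exists>\<phi> :: real \<Rightarrow> real^'d \<Rightarrow> real.
           \<forall>t\<in>orthant. \<forall>x. f t x = \<phi> (\<Prod>\<alpha>\<in>UNIV. t $ \<alpha>) x"
  proof -
  let ?L = "\<lambda>t x. (\<Sum>a\<in>UNIV. Fxx a a t x)"
  have mv: "f (vupd (vupd t \<alpha> (t$\<alpha> * r)) \<beta> (t$\<beta> / r)) x = f t x"
    if "t \<in> orthant" "\<alpha> \<noteq> \<beta>" "r > 0" for t \<alpha> \<beta> r x
    by (rule move[where L = ?L, OF dt dt_cont pde that])
  obtain \<alpha>0 :: 'm where True by simp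
  define tg where "tg S t = (\<chi> \<gamma>. if \<gamma> \<in> S then 1 else if \<gamma> = \<alpha>0 then t$\<alpha>0 * (\<Prod>\<beta>\<in>S. t$\<beta>) else t$\<gamma>)"
    for S and t :: "real^'m"
  have tgO: "tg S t \<in> orthant" if "t \<in> orthant" for S t
    using that by (auto simp: orthant_def tg_def intro!: mult_pos_pos prod_pos)
  have ind: "S \<subseteq> UNIV - {\<alpha>0} \<Longrightarrow> \<forall>t\<in>orthant. f t x = f (tg S t) x" for S x
  proof (induction S rule: finite_induct[OF finite])
    case 1
    have "tg {} t = t" for t by (simp add: tg_def vec_eq_iff)
    then show ?case by simp
  next
    case (2 \<beta> S)
    show ?case
    proof
      fix t :: "real^'m" assume t: "t \<in> orthant"
      have b: "\<beta> \<noteq> \<alpha>0" "\<beta> \<notin> S" "\<alpha>0 \<notin> S" using 2 by auto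
      have tb: "tg S t $ \<beta> = t $ \<beta>" using b by (simp add: tg_def)
      have tbp: "t $ \<beta> > 0" using t by (simp add: orthant_def)
      have "tg (insert \<beta> S) t = vupd (vupd (tg S t) \<alpha>0 (tg S t $ \<alpha>0 * tg S t $ \<beta>)) \<beta> (tg S t $ \<beta> / tg S t $ \<beta>)"
      proof (rule iffD2[OF vec_eq_iff], rule allI)
        fix \<gamma>
        have pi: "(\<Prod>\<beta>'\<in>insert \<beta> S. t$\<beta>') = t$\<beta> * (\<Prod>\<beta>'\<in>S. t$\<beta>')"
          using b 2(1) by simp
        show "tg (insert \<beta> S) t $ \<gamma> = vupd (vupd (tg S t) \<alpha>0 (tg S t $ \<alpha>0 * tg S t $ \<beta>)) \<beta> (tg S t $ \<beta> / tg S t $ \<beta>) $ \<gamma>"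
        proof (cases "\<gamma> = \<beta>")
          case True then show ?thesis using tb tbp b by (simp add: vupd_nth tg_def)
        next
          case False
          show ?thesis
          proof (cases "\<gamma> \<in> S")
            case True then show ?thesis using False b by (auto simp: vupd_nth tg_def)
          next
            case nS: False
            show ?thesis
            proof (cases "\<gamma> = \<alpha>0")
              case True then show ?thesis using False nS b pi tb
                by (simp add: vupd_nth tg_def del: prod.insert)
            next
              case False then show ?thesis using \<open>\<gamma> \<noteq> \<beta>\<close> nS b by (simp add: vupd_nth tg_def)
            qed
          qed
        qed
      qed
      moreover have "f (vupd (vupd (tg S t) \<alpha>0 (tg S t $ \<alpha>0 * tg S t $ \<beta>)) \<beta> (tg S t $ \<beta> / tg S t $ \<beta>)) x = f (tg S t) x"
        by (rule mv) (use tgO[OF t] b tb tbp in auto)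
      ultimately have "f (tg (insert \<beta> S) t) x = f (tg S t) x" by simp
      moreover have "f t x = f (tg S t) x" using 2(3,4) t by blast
      ultimately show "f t x = f (tg (insert \<beta> S) t) x" by simp
    qed
  qed
  show ?thesis
  proof (intro exI[of _ "\<lambda>v x. f (\<chi> \<gamma>. if \<gamma> = \<alpha>0 then v else 1) x"] ballI allI)
    fix t :: "real^'m" and x assume t: "t \<in> orthant"
    have "f t x = f (tg (UNIV - {\<alpha>0}) t) x" using ind[of "UNIV - {\<alpha>0}" x] t by auto
    moreover have "tg (UNIV - {\<alpha>0}) t = (\<chi> \<gamma>. if \<gamma> = \<alpha>0 then (\<Prod>\<alpha>\<in>UNIV. t $ \<alpha>) else 1)"
    proof (rule iffD2[OF vec_eq_iff], rule allI)
      fix \<gamma>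
      have "(\<Prod>\<alpha>\<in>UNIV. t $ \<alpha>) = t $ \<alpha>0 * (\<Prod>\<alpha>\<in>UNIV - {\<alpha>0}. t $ \<alpha>)"
        by (rule prod.remove) auto
      then show "tg (UNIV - {\<alpha>0}) t $ \<gamma> = (\<chi> \<gamma>. if \<gamma> = \<alpha>0 then (\<Prod>\<alpha>\<in>UNIV. t $ \<alpha>) else 1) $ \<gamma>"
        by (simp add: tg_def)
    qed
    ultimately show "f t x = f (\<chi> \<gamma>. if \<gamma> = \<alpha>0 then (\<Prod>\<alpha>\<in>UNIV. t $ \<alpha>) else 1) x" by simp
  qed
qed

end
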